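(* (i) Let $\mu$ be a measure and $f,g$ nonnegative elements of $\mathbb{L}_2(\mu)$ with $\|f\|=1$ and $\|g\|>0$, and let $\overline{g}=g/\|g\|$. Then \[ \|f-\overline{g}\|^2\le\frac{4\|f-g\|^2}{4-\|f-\overline{g}\|^2}\le2\|f-g\|^2. \] (ii) If $s$ is a probability density with respect to $\mu$, $g$ a nonnegative element of $\mathbb{L}_2(\mu)$ with $\|g\|>0$ and $u=(g/\|g\|)^2$, then $u$ is a probability density with respect to $\mu$ and \[ h^2(s,u)\le1-\sqrt{1-\left(\|\sqrt{s}-g\|^2\wedge1\right)}\le\|\sqrt{s}-g\|^2\wedge1. \] (iii) If $t\in\mathbb{L}_1(\mu)$ satisfies $\int(t\vee0)\,d\mu>0$ and $\pi(t)=(t\vee0)/\int(t\vee0)\,d\mu$, then \[ h^2(s,\pi(t))\le1-\sqrt{1-\left(\|\sqrt{s}-\sqrt{t\vee0}\|^2\wedge1\right)}\le\|\sqrt{s}-\sqrt{t\vee0}\|^2\wedge1. \]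
   Context: $\|\cdot\|$ is the $\mathbb{L}_2(\mu)$ norm. For probability densities $s,u$ with respect to $\mu$, $h^2(s,u)=\frac12\int(\sqrt{s}-\sqrt{u})^2\,d\mu$ is the squared Hellinger distance. *)

theory Defs
  imports "HOL-Analysis.Analysis"
begin

definition in_L2 :: "'a measure \<Rightarrow> ('a \<Rightarrow> real) \<Rightarrow> bool" where
  "in_L2 M f \<longleftrightarrow> f \<in> borel_measurable M \<and> integrable M (\<lambda>x. (f x)\<^sup>2)"

definition L2_norm :: "'a measure \<Rightarrow> ('a \<Rightarrow> real) \<Rightarrow> real" where
  "L2_norm M f = sqrt (\<integral>x. (f x)\<^sup>2 \<partial>M)"

definition prob_density :: "'a measure \<Rightarrow> ('a \<Rightarrow> real) \<Rightarrow> bool" where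
  "prob_density M s \<longleftrightarrow> s \<in> borel_measurable M \<and> (AE x in M. 0 \<le> s x)
      \<and> integrable M s \<and> (\<integral>x. s x \<partial>M) = 1"

definition hellinger2 :: "'a measure \<Rightarrow> ('a \<Rightarrow> real) \<Rightarrow> ('a \<Rightarrow> real) \<Rightarrow> real" where
  "hellinger2 M s u = (1/2) * (\<integral>x. (sqrt (s x) - sqrt (u x))\<^sup>2 \<partial>M)"

end

theory Submission
  imports Defs
begin

lemma arith1:
  fixes N c :: real assumes "N>0" "c\<ge>0" "1-2*N*c+N^2 \<ge> 0"
  shows "2-2*c \<le> 4*(1-2*N*c+N^2)/(4-(2-2*c)) \<and> 4*(1-2*N*c+N^2)/(4-(2-2*c)) \<le> 2*(1-2*N*c+N^2)"
proof -
  have p: "4-(2-2*c) > 0" using assms by auto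
  have e: "4*(1-2*N*c+N^2) - (2-2*c)*(4-(2-2*c)) = 4*(N-c)^2"
    by (simp add: algebra_simps power2_eq_square)
  have "(2-2*c)*(4-(2-2*c)) \<le> 4*(1-2*N*c+N^2)"
    using e by (smt (verit) zero_le_power2)
  hence A: "2-2*c \<le> 4*(1-2*N*c+N^2)/(4-(2-2*c))" using p by (simp add: le_divide_eq)
  have e2: "2*(1-2*N*c+N^2) * (4-(2-2*c)) - 4*(1-2*N*c+N^2) = 4*c*(1-2*N*c+N^2)"
    by (simp add: algebra_simps)
  have "0 \<le> 4*c*(1-2*N*c+N^2)" using assms by simp
  hence "4*(1-2*N*c+N^2) \<le> 2*(1-2*N*c+N^2) * (4-(2-2*c))"
    using e2 by linarith
  hence "4*(1-2*N*c+N^2)/(4-(2-2*c)) \<le> 2*(1-2*N*c+N^2)" using p by (simp add: divide_le_eq)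
  with A show ?thesis by blast
qed

lemma arith2:
  fixes N c b :: real assumes "N>0" "c\<ge>0" "b = 1-2*N*c+N^2" "b \<ge> 0"
  shows "(2-2*c)/2 \<le> 1 - sqrt (1 - min b 1) \<and> 1 - sqrt (1 - min b 1) \<le> min b 1"
proof -
  have e: "b - (1 - c^2) = (N-c)^2" using assms by (simp add: algebra_simps power2_eq_square)
  have b1: "1 - c^2 \<le> b" using e by (smt (verit) zero_le_power2)
  have "1 - min b 1 \<le> c^2" using b1 by (auto simp: min_def)
  hence "sqrt (1 - min b 1) \<le> sqrt (c^2)" by (rule real_sqrt_le_mono)
  hence A: "sqrt (1 - min b 1) \<le> c" using assms by simp
  have d0: "0 \<le> 1 - min b 1" "1 - min b 1 \<le> 1" using b1 assms(4) by (auto simp: min_def)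
  have "(1 - min b 1)^2 \<le> 1 - min b 1" using d0 by (simp add: power2_eq_square mult_left_le)
  hence "sqrt ((1 - min b 1)^2) \<le> sqrt (1 - min b 1)" by (rule real_sqrt_le_mono)
  hence "1 - min b 1 \<le> sqrt (1 - min b 1)" using d0 by simp
  with A show ?thesis by auto
qed

lemma L2_prod_int:
  assumes "in_L2 M f" "in_L2 M g"
  shows "integrable M (\<lambda>x. f x * g x)"
proof (rule Bochner_Integration.integrable_bound[where f="\<lambda>x. (f x)\<^sup>2 + (g x)\<^sup>2"])
  show "integrable M (\<lambda>x. (f x)\<^sup>2 + (g x)\<^sup>2)" using assms by (auto simp: in_L2_def)
  show "(\<lambda>x. f x * g x) \<in> borel_measurable M" using assms by (auto simp: in_L2_def)
  show "AE x in M. norm (f x * g x) \<le> norm ((f x)\<^sup>2 + (g x)\<^sup>2)"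
  proof (intro AE_I2)
    fix x
    have e: "(\<bar>f x\<bar> - \<bar>g x\<bar>)\<^sup>2 = (f x)\<^sup>2 + (g x)\<^sup>2 - 2*(\<bar>f x\<bar>*\<bar>g x\<bar>)"
      by (simp add: power2_diff)
    have "0 \<le> (\<bar>f x\<bar> - \<bar>g x\<bar>)\<^sup>2" by simp
    hence h: "2*(\<bar>f x\<bar>*\<bar>g x\<bar>) \<le> (f x)\<^sup>2 + (g x)\<^sup>2" unfolding e by linarith
    have h2: "0 \<le> \<bar>f x\<bar>*\<bar>g x\<bar>" by simp
    have "norm (f x * g x) = \<bar>f x\<bar>*\<bar>g x\<bar>" by (simp add: abs_mult)
    moreover have "norm ((f x)\<^sup>2 + (g x)\<^sup>2) = (f x)\<^sup>2 + (g x)\<^sup>2" by simp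
    ultimately show "norm (f x * g x) \<le> norm ((f x)\<^sup>2 + (g x)\<^sup>2)" using h h2 by linarith
  qed
qed

lemma L2_diff:
  assumes "in_L2 M f" "in_L2 M g"
  shows "(\<integral>x. (f x - g x)\<^sup>2 \<partial>M) = (\<integral>x. (f x)\<^sup>2 \<partial>M) - 2 * (\<integral>x. f x * g x \<partial>M) + (\<integral>x. (g x)\<^sup>2 \<partial>M)"
proof -
  have i1: "integrable M (\<lambda>x. (f x)\<^sup>2)" "integrable M (\<lambda>x. (g x)\<^sup>2)" using assms by (auto simp: in_L2_def)
  have i2: "integrable M (\<lambda>x. 2 * (f x * g x))" using L2_prod_int[OF assms] by simp
  have "(\<lambda>x. (f x - g x)\<^sup>2) = (\<lambda>x. ((f x)\<^sup>2 - 2 * (f x * g x)) + (g x)\<^sup>2)"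
    by (simp add: power2_diff algebra_simps)
  hence "(\<integral>x. (f x - g x)\<^sup>2 \<partial>M) = (\<integral>x. ((f x)\<^sup>2 - 2 * (f x * g x)) + (g x)\<^sup>2 \<partial>M)" by simp
  also have "\<dots> = (\<integral>x. (f x)\<^sup>2 - 2 * (f x * g x) \<partial>M) + (\<integral>x. (g x)\<^sup>2 \<partial>M)"
    using i1 i2 by (intro Bochner_Integration.integral_add) auto
  also have "(\<integral>x. (f x)\<^sup>2 - 2 * (f x * g x) \<partial>M) = (\<integral>x. (f x)\<^sup>2 \<partial>M) - (\<integral>x. 2 * (f x * g x) \<partial>M)"
    using i1 i2 by (intro Bochner_Integration.integral_diff) auto
  finally show ?thesis by simp
qed

lemma L2_norm_sq: "(L2_norm M f)\<^sup>2 = (\<integral>x. (f x)\<^sup>2 \<partial>M)"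
  unfolding L2_norm_def by (simp add: integral_nonneg_AE)

lemma L2_scale: "in_L2 M g \<Longrightarrow> in_L2 M (\<lambda>x. g x / c)"
  unfolding in_L2_def by (auto simp: power_divide)

lemma part1:
  assumes "in_L2 M f" "in_L2 M g" "AE x in M. 0 \<le> f x" "AE x in M. 0 \<le> g x"
    "L2_norm M f = 1" "L2_norm M g > 0"
  defines "N \<equiv> L2_norm M g"
  defines "c \<equiv> (\<integral>x. f x * g x \<partial>M) / N"
  shows "(L2_norm M (\<lambda>x. f x - g x / N))\<^sup>2 = 2 - 2*c"
    "(L2_norm M (\<lambda>x. f x - g x))\<^sup>2 = 1 - 2*N*c + N^2" "c \<ge> 0" "N > 0"
proof -
  show N: "N > 0" using assms by simp
  have f1: "(\<integral>x. (f x)\<^sup>2 \<partial>M) = 1" using L2_norm_sq[of M f] assms by simp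
  have g1: "(\<integral>x. (g x)\<^sup>2 \<partial>M) = N^2" using L2_norm_sq[of M g] assms by simp
  have gb: "in_L2 M (\<lambda>x. g x / N)" using L2_scale assms by blast
  have "(\<integral>x. (g x / N)\<^sup>2 \<partial>M) = (\<integral>x. (g x)\<^sup>2 / N^2 \<partial>M)" by (simp add: power_divide)
  also have "\<dots> = 1" using g1 N by simp
  finally have gb1: "(\<integral>x. (g x / N)\<^sup>2 \<partial>M) = 1" .
  have "(\<integral>x. f x * (g x / N) \<partial>M) = (\<integral>x. f x * g x / N \<partial>M)" by simp
  also have "\<dots> = c" unfolding c_def by simp
  finally have fgb: "(\<integral>x. f x * (g x / N) \<partial>M) = c" .
  show "(L2_norm M (\<lambda>x. f x - g x / N))\<^sup>2 = 2 - 2*c"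
    unfolding L2_norm_sq L2_diff[OF assms(1) gb] f1 gb1 fgb by simp
  show "(L2_norm M (\<lambda>x. f x - g x))\<^sup>2 = 1 - 2*N*c + N^2"
    unfolding L2_norm_sq L2_diff[OF assms(1,2)] f1 g1 c_def using N by simp
  have "(\<integral>x. f x * g x \<partial>M) \<ge> 0" using assms(3,4)
    by (intro integral_nonneg_AE) (auto elim: AE_mp)
  then show "c \<ge> 0" unfolding c_def using N by simp
qed

lemma part2:
  assumes s: "prob_density M s" and g: "in_L2 M g" "AE x in M. 0 \<le> g x" "L2_norm M g > 0"
  shows "prob_density M (\<lambda>x. (g x / L2_norm M g)\<^sup>2)
         \<and> hellinger2 M s (\<lambda>x. (g x / L2_norm M g)\<^sup>2) \<le> 1 - sqrt (1 - min ((L2_norm M (\<lambda>x. sqrt (s x) - g x))\<^sup>2) 1)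
         \<and> 1 - sqrt (1 - min ((L2_norm M (\<lambda>x. sqrt (s x) - g x))\<^sup>2) 1) \<le> min ((L2_norm M (\<lambda>x. sqrt (s x) - g x))\<^sup>2) 1"
proof -
  define N where "N = L2_norm M g"
  have N: "N > 0" using g N_def by simp
  have sm[measurable]: "s \<in> borel_measurable M" and si: "integrable M s" and s0: "AE x in M. 0 \<le> s x"
    and s1: "(\<integral>x. s x \<partial>M) = 1" using s by (auto simp: prob_density_def)
  have gm[measurable]: "g \<in> borel_measurable M" and gi: "integrable M (\<lambda>x. (g x)\<^sup>2)"
    using g by (auto simp: in_L2_def)
  have g1: "(\<integral>x. (g x)\<^sup>2 \<partial>M) = N^2" using L2_norm_sq[of M g] N_def by simp
  have sq: "(\<lambda>x. (sqrt (s x))\<^sup>2) = (\<lambda>x. \<bar>s x\<bar>)" by (simp add: power2_eq_square)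
  have fL: "in_L2 M (\<lambda>x. sqrt (s x))" unfolding in_L2_def sq using si by auto
  have "(\<integral>x. (sqrt (s x))\<^sup>2 \<partial>M) = (\<integral>x. s x \<partial>M)" unfolding sq
    by (rule integral_cong_AE) (use s0 in auto)
  hence f1: "L2_norm M (\<lambda>x. sqrt (s x)) = 1" unfolding L2_norm_def s1 by simp
  have f0: "AE x in M. 0 \<le> sqrt (s x)" using s0 by auto
  have P: "(L2_norm M (\<lambda>x. sqrt (s x) - g x / N))\<^sup>2 = 2 - 2*((\<integral>x. sqrt (s x) * g x \<partial>M) / N)"
    "(L2_norm M (\<lambda>x. sqrt (s x) - g x))\<^sup>2 = 1 - 2*N*((\<integral>x. sqrt (s x) * g x \<partial>M) / N) + N^2"
    "(\<integral>x. sqrt (s x) * g x \<partial>M) / N \<ge> 0"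
    using part1[OF fL g(1) f0 g(2) f1 g(3)] unfolding N_def by auto
  have pd: "prob_density M (\<lambda>x. (g x / N)\<^sup>2)"
    unfolding prob_density_def using gi g1 N by (auto simp: power_divide)
  have "hellinger2 M s (\<lambda>x. (g x / N)\<^sup>2) = (1/2) * (\<integral>x. (sqrt (s x) - g x / N)\<^sup>2 \<partial>M)"
    unfolding hellinger2_def
    by (rule arg_cong[where f="\<lambda>a. (1/2) * a"], rule integral_cong_AE) (use g(2) N in auto)
  also have "\<dots> = (2 - 2*((\<integral>x. sqrt (s x) * g x \<partial>M) / N)) / 2"
    using P(1) L2_norm_sq[of M "\<lambda>x. sqrt (s x) - g x / N"] by simp
  finally have H: "hellinger2 M s (\<lambda>x. (g x / N)\<^sup>2) = (2 - 2*((\<integral>x. sqrt (s x) * g x \<partial>M) / N)) / 2" .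
  have A: "(2 - 2*((\<integral>x. sqrt (s x) * g x \<partial>M) / N)) / 2 \<le> 1 - sqrt (1 - min ((L2_norm M (\<lambda>x. sqrt (s x) - g x))\<^sup>2) 1)
     \<and> 1 - sqrt (1 - min ((L2_norm M (\<lambda>x. sqrt (s x) - g x))\<^sup>2) 1) \<le> min ((L2_norm M (\<lambda>x. sqrt (s x) - g x))\<^sup>2) 1"
    by (rule arith2[OF N P(3) P(2)]) simp
  show ?thesis using pd H A unfolding N_def by simp
qed

lemma part3:
  fixes t :: "'a \<Rightarrow> real"
  assumes s: "prob_density M s" and t: "integrable M t" and I: "(\<integral>x. max (t x) 0 \<partial>M) > 0"
  shows "hellinger2 M s (\<lambda>x. max (t x) 0 / (\<integral>y. max (t y) 0 \<partial>M)) \<le> 1 - sqrt (1 - min ((L2_norm M (\<lambda>x. sqrt (s x) - sqrt (max (t x) 0)))\<^sup>2) 1)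
         \<and> 1 - sqrt (1 - min ((L2_norm M (\<lambda>x. sqrt (s x) - sqrt (max (t x) 0)))\<^sup>2) 1) \<le> min ((L2_norm M (\<lambda>x. sqrt (s x) - sqrt (max (t x) 0)))\<^sup>2) 1"
proof -
  have tm[measurable]: "t \<in> borel_measurable M" using t by auto
  have sq: "(\<lambda>x. (sqrt (max (t x) 0))\<^sup>2) = (\<lambda>x. max (t x) 0)" by auto
  have ti: "integrable M (\<lambda>x. max (t x) 0)" using t by auto
  have gL: "in_L2 M (\<lambda>x. sqrt (max (t x) 0))" unfolding in_L2_def sq using ti by auto
  have nrm: "L2_norm M (\<lambda>x. sqrt (max (t x) 0)) = sqrt (\<integral>x. max (t x) 0 \<partial>M)"
    unfolding L2_norm_def sq ..
  have g0: "AE x in M. 0 \<le> sqrt (max (t x) 0)" by auto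
  have gp: "L2_norm M (\<lambda>x. sqrt (max (t x) 0)) > 0" using I nrm by simp
  have u: "(\<lambda>x. (sqrt (max (t x) 0) / L2_norm M (\<lambda>x. sqrt (max (t x) 0)))\<^sup>2)
      = (\<lambda>x. max (t x) 0 / (\<integral>y. max (t y) 0 \<partial>M))"
    unfolding nrm using I by (auto simp: power_divide)
  show ?thesis using part2[OF s gL g0 gp] unfolding u by blast
qed

theorem lemma1:
  fixes M :: "'a measure"
  shows
  "(\<forall>f g. in_L2 M f \<and> in_L2 M g \<and> (AE x in M. 0 \<le> f x) \<and> (AE x in M. 0 \<le> g x)
        \<and> L2_norm M f = 1 \<and> L2_norm M g > 0 \<longrightarrow>
       (let gb = (\<lambda>x. g x / L2_norm M g) in
         (L2_norm M (\<lambda>x. f x - gb x))\<^sup>2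
           \<le> 4 * (L2_norm M (\<lambda>x. f x - g x))\<^sup>2 / (4 - (L2_norm M (\<lambda>x. f x - gb x))\<^sup>2)
         \<and> 4 * (L2_norm M (\<lambda>x. f x - g x))\<^sup>2 / (4 - (L2_norm M (\<lambda>x. f x - gb x))\<^sup>2)
           \<le> 2 * (L2_norm M (\<lambda>x. f x - g x))\<^sup>2))
   \<and>
   (\<forall>s g. prob_density M s \<and> in_L2 M g \<and> (AE x in M. 0 \<le> g x) \<and> L2_norm M g > 0 \<longrightarrow>
       (let u = (\<lambda>x. (g x / L2_norm M g)\<^sup>2);
            d = min ((L2_norm M (\<lambda>x. sqrt (s x) - g x))\<^sup>2) 1 in
         prob_density M u
         \<and> hellinger2 M s u \<le> 1 - sqrt (1 - d)
         \<and> 1 - sqrt (1 - d) \<le> d))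
   \<and>
   (\<forall>s t. prob_density M s \<and> integrable M t \<and> (\<integral>x. max (t x) 0 \<partial>M) > 0 \<longrightarrow>
       (let p = (\<lambda>x. max (t x) 0 / (\<integral>y. max (t y) 0 \<partial>M));
            d = min ((L2_norm M (\<lambda>x. sqrt (s x) - sqrt (max (t x) 0)))\<^sup>2) 1 in
         hellinger2 M s p \<le> 1 - sqrt (1 - d)
         \<and> 1 - sqrt (1 - d) \<le> d))"
proof (intro conjI allI impI)
  fix f g assume a: "in_L2 M f \<and> in_L2 M g \<and> (AE x in M. 0 \<le> f x) \<and> (AE x in M. 0 \<le> g x)
        \<and> L2_norm M f = 1 \<and> L2_norm M g > 0"
  hence P: "(L2_norm M (\<lambda>x. f x - g x / L2_norm M g))\<^sup>2 = 2 - 2*((\<integral>x. f x * g x \<partial>M) / L2_norm M g)"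
    "(L2_norm M (\<lambda>x. f x - g x))\<^sup>2 = 1 - 2*L2_norm M g*((\<integral>x. f x * g x \<partial>M) / L2_norm M g) + (L2_norm M g)^2"
    "(\<integral>x. f x * g x \<partial>M) / L2_norm M g \<ge> 0" "L2_norm M g > 0"
    using part1[of M f g] by auto
  have b0: "0 \<le> 1 - 2*L2_norm M g*((\<integral>x. f x * g x \<partial>M) / L2_norm M g) + (L2_norm M g)^2"
    using P(2) by (metis zero_le_power2)
  show "let gb = (\<lambda>x. g x / L2_norm M g) in
         (L2_norm M (\<lambda>x. f x - gb x))\<^sup>2
           \<le> 4 * (L2_norm M (\<lambda>x. f x - g x))\<^sup>2 / (4 - (L2_norm M (\<lambda>x. f x - gb x))\<^sup>2)
         \<and> 4 * (L2_norm M (\<lambda>x. f x - g x))\<^sup>2 / (4 - (L2_norm M (\<lambda>x. f x - gb x))\<^sup>2)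
           \<le> 2 * (L2_norm M (\<lambda>x. f x - g x))\<^sup>2"
    unfolding Let_def P(1) P(2) by (rule arith1[OF P(4) P(3) b0])
next
  fix s g assume "prob_density M s \<and> in_L2 M g \<and> (AE x in M. 0 \<le> g x) \<and> L2_norm M g > 0"
  then show "let u = (\<lambda>x. (g x / L2_norm M g)\<^sup>2);
            d = min ((L2_norm M (\<lambda>x. sqrt (s x) - g x))\<^sup>2) 1 in
         prob_density M u
         \<and> hellinger2 M s u \<le> 1 - sqrt (1 - d)
         \<and> 1 - sqrt (1 - d) \<le> d"
    unfolding Let_def using part2[of M s g] by blast
next
  fix s and t :: "'a \<Rightarrow> real" assume "prob_density M s \<and> integrable M t \<and> (\<integral>x. max (t x) 0 \<partial>M) > 0"
  then show "let p = (\<lambda>x. max (t x) 0 / (\<integral>y. max (t y) 0 \<partial>M));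
            d = min ((L2_norm M (\<lambda>x. sqrt (s x) - sqrt (max (t x) 0)))\<^sup>2) 1 in
         hellinger2 M s p \<le> 1 - sqrt (1 - d)
         \<and> 1 - sqrt (1 - d) \<le> d"
    unfolding Let_def using part3[of M s t] by blast
qed

end
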